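(* Let $X^{2n}$ be a quasitoric manifold over a simple polytope $P^n$, $T^{n-1}\subset T^n$ a subtorus, and $1\leqslant j\leqslant n-1$. The restricted action of $T^{n-1}$ on $X^{2n}$ is in $j$-general position if and only if $\dim K_{\mathrm{spec}}\leqslant n-2-j$.
   Context: For each facet $F$ of $P^n$, $\lambda(F)\in N=\mathrm{Hom}(T^1,T^n)\cong\mathbb{Z}^n$ is the primitive vector of the circle subgroup stabilizing points over the interior of $F$. $\Pi\subset N$ is the image of $\mathrm{Hom}(T^1,T^{n-1})$. A facet $F$ is special if $\lambda(F)\in\Pi$. $K_{\mathrm{spec}}$ is the simplicial complex whose vertices are the special facets, a set of special facets being a simplex iff they have nonempty common intersection in $P^n$. An action of $T^{n-1}$ on $X^{2n}$ is in $j$-general position if it is effective, has nonempty finite fixed point set, and at each fixed point every $j$ of the $n$ tangent weights in $\mathrm{Hom}(T^{n-1},T^1)$ are linearly independent over $\mathbb{Q}$. *)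

theory Defs
  imports "HOL-Analysis.Analysis"
begin

text \<open>Combinatorial model of a quasitoric manifold (Davis--Januszkiewicz):
  a simple n-polytope P in R^n together with its characteristic function
  lam : facets -> Z^n = N.  The lattice Z^n is int^'n, n = CARD('n).\<close>

definition facets_at :: "(real^'n) set \<Rightarrow> real^'n \<Rightarrow> (real^'n) set set" where
  "facets_at P v = {F. F facet_of P \<and> v \<in> F}"

definition simple_polytope :: "(real^'n) set \<Rightarrow> bool" where
  "simple_polytope P \<longleftrightarrow> polytope P \<and> aff_dim P = int CARD('n) \<and>
     (\<forall>v. v extreme_point_of P \<longrightarrow> card (facets_at P v) = CARD('n))"

definition int_basis :: "(real^'n) set set \<Rightarrow> ((real^'n) set \<Rightarrow> int^'n) \<Rightarrow> bool" where
  "int_basis A lam \<longleftrightarrow> (\<forall>x::int^'n. \<exists>!c::(real^'n) set \<Rightarrow> int.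
      (\<forall>F. F \<notin> A \<longrightarrow> c F = 0) \<and> x = (\<Sum>F\<in>A. c F *s lam F))"

definition quasitoric_pair :: "(real^'n) set \<Rightarrow> ((real^'n) set \<Rightarrow> int^'n) \<Rightarrow> bool" where
  "quasitoric_pair P lam \<longleftrightarrow> simple_polytope P \<and>
     (\<forall>v. v extreme_point_of P \<longrightarrow> int_basis (facets_at P v) lam)"

text \<open>L = image of Hom(T^1,T^{n-1}) in N for a subtorus T^{n-1} of T^n:
  a saturated subgroup of Z^n of rank n-1.\<close>
definition subtorus_lattice :: "(int^'n) set \<Rightarrow> bool" where
  "subtorus_lattice L \<longleftrightarrow> 0 \<in> L \<and> (\<forall>x\<in>L. \<forall>y\<in>L. x + y \<in> L \<and> - x \<in> L) \<and>
     (\<forall>k::int. \<forall>x. k \<noteq> 0 \<longrightarrow> k *s x \<in> L \<longrightarrow> x \<in> L) \<and>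
     dim ((\<lambda>x. (\<chi> i. real_of_int (x $ i)) :: real^'n) ` L) = CARD('n) - 1"

text \<open>Pairing Hom(T^n,T^1) x Hom(T^1,T^n) -> Z.\<close>
definition idot :: "int^'n \<Rightarrow> int^'n \<Rightarrow> int" where
  "idot a x = (\<Sum>i\<in>UNIV. a $ i * x $ i)"

text \<open>Tangent weight of T^n at the fixed point over vertex v corresponding to the
  facet F containing v: the dual basis to {lam G : G in facets_at P v}.\<close>
definition weight :: "(real^'n) set \<Rightarrow> ((real^'n) set \<Rightarrow> int^'n) \<Rightarrow> real^'n \<Rightarrow> (real^'n) set \<Rightarrow> int^'n" where
  "weight P lam v F = (THE a. \<forall>G\<in>facets_at P v. idot a (lam G) = (if G = F then 1 else 0))"

text \<open>Z-span of lam over the facets containing a face G: lattice of the stabilizer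
  torus of points over the relative interior of G.\<close>
definition stab_lattice :: "(real^'n) set \<Rightarrow> ((real^'n) set \<Rightarrow> int^'n) \<Rightarrow> (real^'n) set \<Rightarrow> (int^'n) set" where
  "stab_lattice P lam G = {x. \<exists>c::(real^'n) set \<Rightarrow> int.
      x = (\<Sum>F\<in>{F. F facet_of P \<and> G \<subseteq> F}. c F *s lam F)}"

text \<open>Faces over which the points are fixed by the subtorus with lattice L.\<close>
definition fixed_faces :: "(real^'n) set \<Rightarrow> ((real^'n) set \<Rightarrow> int^'n) \<Rightarrow> (int^'n) set \<Rightarrow> (real^'n) set set" where
  "fixed_faces P lam L = {G. G face_of P \<and> G \<noteq> {} \<and> L \<subseteq> stab_lattice P lam G}"

definition restricted_weights_indep ::
  "(real^'n) set \<Rightarrow> ((real^'n) set \<Rightarrow> int^'n) \<Rightarrow> (int^'n) set \<Rightarrow> real^'n \<Rightarrow> (real^'n) set set \<Rightarrow> bool" where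
  "restricted_weights_indep P lam L v S \<longleftrightarrow> (\<forall>c::(real^'n) set \<Rightarrow> rat.
      (\<forall>x\<in>L. (\<Sum>F\<in>S. c F * of_int (idot (weight P lam v F) x)) = 0) \<longrightarrow> (\<forall>F\<in>S. c F = 0))"

text \<open>j-general position of the restricted action (effectiveness is automatic for a
  subtorus of the effectively acting T^n).  Fixed point set nonempty and finite:
  some face is fixed, and every fixed face is a vertex.\<close>
definition j_general_position ::
  "(real^'n) set \<Rightarrow> ((real^'n) set \<Rightarrow> int^'n) \<Rightarrow> (int^'n) set \<Rightarrow> nat \<Rightarrow> bool" where
  "j_general_position P lam L j \<longleftrightarrow>
     fixed_faces P lam L \<noteq> {} \<and> (\<forall>G\<in>fixed_faces P lam L. \<exists>v. G = {v}) \<and>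
     (\<forall>v. v extreme_point_of P \<longrightarrow> (\<forall>S. S \<subseteq> facets_at P v \<and> card S = j \<longrightarrow>
        restricted_weights_indep P lam L v S))"

definition special_facets :: "(real^'n) set \<Rightarrow> ((real^'n) set \<Rightarrow> int^'n) \<Rightarrow> (int^'n) set \<Rightarrow> (real^'n) set set" where
  "special_facets P lam L = {F. F facet_of P \<and> lam F \<in> L}"

definition Kspec_simplices :: "(real^'n) set \<Rightarrow> ((real^'n) set \<Rightarrow> int^'n) \<Rightarrow> (int^'n) set \<Rightarrow> (real^'n) set set set" where
  "Kspec_simplices P lam L = {\<sigma>. \<sigma> \<noteq> {} \<and> \<sigma> \<subseteq> special_facets P lam L \<and> \<Inter>\<sigma> \<noteq> {}}"

definition Kspec_dim :: "(real^'n) set \<Rightarrow> ((real^'n) set \<Rightarrow> int^'n) \<Rightarrow> (int^'n) set \<Rightarrow> int" where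
  "Kspec_dim P lam L = (if Kspec_simplices P lam L = {} then -1
      else int (Max (card ` Kspec_simplices P lam L)) - 1)"

end

theory Submission
  imports Defs
begin

lemma idot_add: "idot a (x + y) = idot a x + idot a y"
  by (simp add: idot_def distrib_left sum.distrib)
lemma idot_diff: "idot a (x - y) = idot a x - idot a y"
  by (simp add: idot_def right_diff_distrib sum_subtractf)
lemma idot_smult: "idot a (k *s x) = k * idot a x"
  by (simp add: idot_def sum_distrib_left algebra_simps)
lemma idot_sum: "idot a (sum f I) = (\<Sum>i\<in>I. idot a (f i))"
  by (simp add: idot_def sum_component sum_distrib_left sum.swap[of _ UNIV I])
lemma idot_axis: "idot a (axis j 1) = a $ j"
proof -
  have "(\<Sum>i\<in>UNIV. a $ i * axis j 1 $ i) = (\<Sum>i\<in>UNIV. if i = j then a $ i else 0)"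
    by (rule sum.cong) (auto simp: axis_def)
  then show ?thesis by (simp add: idot_def)
qed
lemma idot_zero_imp: "(\<And>x. idot a x = 0) \<Longrightarrow> a = 0"
  by (metis idot_axis vec_eq_iff zero_index)

definition ofm :: "int^'n^'n \<Rightarrow> real^'n^'n" where
  "ofm A = (\<chi> i j. of_int (A$i$j))"

lemma det_ofm: "det (ofm A) = of_int (det A)"
  by (simp add: ofm_def det_def of_int_sum of_int_prod)

lemma L_props:
  assumes "subtorus_lattice L"
  shows L0: "0 \<in> L" and Ladd: "\<And>x y. x \<in> L \<Longrightarrow> y \<in> L \<Longrightarrow> x + y \<in> L"
    and Lneg: "\<And>x. x \<in> L \<Longrightarrow> - x \<in> L"
    and Lsat: "\<And>k x. k \<noteq> 0 \<Longrightarrow> k *s x \<in> L \<Longrightarrow> x \<in> L"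
  using assms unfolding subtorus_lattice_def by blast+

lemma L_diff: "subtorus_lattice L \<Longrightarrow> x \<in> L \<Longrightarrow> y \<in> L \<Longrightarrow> x - y \<in> L"
  by (metis L_props(2,3) diff_conv_add_uminus)

lemma L_smult_nat: "subtorus_lattice L \<Longrightarrow> x \<in> L \<Longrightarrow> int m *s x \<in> L"
proof (induction m)
  case 0 then show ?case using L_props(1) by (simp add: vector_smult_lzero)
next
  case (Suc m)
  have "int (Suc m) *s x = int m *s x + x" by (simp add: vec_eq_iff algebra_simps)
  then show ?case using Suc L_props(2) by metis
qed

lemma L_smult: "subtorus_lattice L \<Longrightarrow> x \<in> L \<Longrightarrow> k *s x \<in> L"
proof (cases "k \<ge> 0")
  case True
  assume a: "subtorus_lattice L" "x \<in> L"
  then show ?thesis using L_smult_nat[OF a, of "nat k"] True by simp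
next
  case False
  assume a: "subtorus_lattice L" "x \<in> L"
  have "k *s x = - (int (nat (-k)) *s x)" using False by (simp add: vec_eq_iff)
  then show ?thesis using L_smult_nat[OF a, of "nat (-k)"] L_props(3)[OF a(1)] by metis
qed

lemma L_sum:
  assumes "subtorus_lattice L" "finite I" "\<And>i. i \<in> I \<Longrightarrow> f i \<in> L"
  shows "sum f I \<in> L"
  using assms(2,3)
proof (induction I rule: finite_induct)
  case empty then show ?case using L_props(1)[OF assms(1)] by simp
next
  case (insert a F) then show ?case using L_props(2)[OF assms(1)] by simp
qed

lemma mz_exists:
  fixes L :: "(int^'n) set"
  assumes sL: "subtorus_lattice L"
  obtains mz :: "int^'n" where "mz \<noteq> 0" "\<forall>x\<in>L. idot mz x = 0" "\<forall>x. idot mz x = 0 \<longrightarrow> x \<in> L"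
proof -
  define \<psi> where "\<psi> = (\<lambda>x::int^'n. (\<chi> i. real_of_int (x$i)) :: real^'n)"
  have Ldim: "dim (\<psi> ` L) = CARD('n) - 1" using sL unfolding subtorus_lattice_def \<psi>_def by blast
  obtain B where B: "B \<subseteq> \<psi> ` L" "independent B" "\<psi> ` L \<subseteq> span B" "card B = dim (\<psi> ` L)"
    by (rule basis_exists)
  have finB: "finite B" using B(2) by (rule independent_imp_finite)
  obtain i0 :: 'n where True by blast
  have "card (UNIV - {i0}) = card B" using B(4) Ldim by (simp add: card_Diff_singleton)
  then obtain \<beta> where bij: "bij_betw \<beta> (UNIV - {i0}) B"
    using finite_same_card_bij[of "UNIV - {i0}" B] finB by auto
  have bi: "\<beta> i \<in> \<psi> ` L" if "i \<noteq> i0" for i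
  proof -
    have "\<beta> i \<in> B" using bij that unfolding bij_betw_def by blast
    then show ?thesis using B(1) by blast
  qed
  have "\<forall>i. \<exists>y. i \<noteq> i0 \<longrightarrow> y \<in> L \<and> \<psi> y = \<beta> i"
  proof
    fix i show "\<exists>y. i \<noteq> i0 \<longrightarrow> y \<in> L \<and> \<psi> y = \<beta> i"
    proof (cases "i = i0")
      case True then show ?thesis by blast
    next
      case False
      then obtain y where "y \<in> L" "\<beta> i = \<psi> y" using bi[OF False] by (auto simp: image_iff)
      then show ?thesis by metis
    qed
  qed
  then obtain l where l: "\<And>i. i \<noteq> i0 \<Longrightarrow> l i \<in> L \<and> \<psi> (l i) = \<beta> i" by metis
  define Z where "Z = (\<lambda>x. (\<chi> i. if i = i0 then x else l i) :: int^'n^'n)"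
  define Mr where "Mr = (\<lambda>y. (\<chi> i. if i = i0 then y else \<beta> i) :: real^'n^'n)"
  have ofmZ: "ofm (Z x) = Mr (\<psi> x)" for x
    using l by (auto simp: vec_eq_iff ofm_def Z_def Mr_def \<psi>_def)
  have rowsMr: "rows (Mr y) = insert y B" for y
  proof -
    have "rows (Mr y) = (\<lambda>i. if i = i0 then y else \<beta> i) ` UNIV"
      by (auto simp: rows_def row_def Mr_def)
    also have "\<dots> = insert y (\<beta> ` (UNIV - {i0}))" by auto
    also have "\<dots> = insert y B" using bij by (simp add: bij_betw_def)
    finally show ?thesis .
  qed
  have rankMr: "rank (Mr y) = dim (insert y B)" for y
    by (simp add: row_rank_def rowsMr)
  have dimB: "dim (span B) = CARD('n) - 1" using B(2,4) Ldim by (simp add: dim_eq_card_independent)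
  have "\<exists>k. axis k (1::real) \<notin> span B"
  proof (rule ccontr)
    assume "\<not> ?thesis"
    then have "\<forall>k. axis k (1::real) \<in> span B" by blast
    then have "x \<in> span B" for x :: "real^'n"
    proof -
      assume ax: "\<forall>k. axis k (1::real) \<in> span B"
      have "(\<Sum>i\<in>UNIV. x$i *\<^sub>R axis i (1::real)) \<in> span B"
        by (intro span_sum span_scale) (use ax in auto)
      then show ?thesis using basis_expansion[of x] by (simp add: scalar_mult_eq_scaleR)
    qed
    then have "span B = UNIV" by auto
    then have "dim (span B) = CARD('n)" by simp
    moreover have "CARD('n) > 0" by (rule zero_less_card_finite)
    ultimately show False using dimB by arith
  qed
  then obtain k where k: "axis k (1::real) \<notin> span B" by blast
  let ?e = "axis k (1::real)"
  have psie: "\<psi> (axis k 1) = ?e" by (auto simp: \<psi>_def vec_eq_iff axis_def)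
  have detN: "det (Mr ?e) \<noteq> 0"
  proof -
    have "?e \<notin> B" using k span_base by blast
    then have "dim (insert ?e B) = CARD('n)"
      using B(2) k dimB finB by (simp add: dim_eq_card_independent independent_insertI card_insert_if)
    then show ?thesis by (simp add: det_eq_0_rank rankMr)
  qed
  define mz where "mz = (\<chi> j. det (Z (axis j 1)))"
  have idot_mz: "idot mz x = det (Z x)" for x
  proof -
    have "Z x = (\<chi> i. if i = i0 then sum (\<lambda>j. x$j *s axis j 1) UNIV else l i)"
      by (simp only: Z_def basis_expansion)
    then have "det (Z x) = (\<Sum>j\<in>UNIV. det ((\<chi> i. if i = i0 then x$j *s axis j 1 else l i) :: int^'n^'n))"
      by (simp add: det_linear_row_sum)
    also have "\<dots> = (\<Sum>j\<in>UNIV. x$j * det (Z (axis j 1)))"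
      by (simp add: det_row_mul Z_def)
    finally show ?thesis by (simp add: idot_def mz_def mult.commute)
  qed
  have real_mz: "real_of_int (idot mz x) = det (Mr (\<psi> x))" for x
    by (simp add: idot_mz flip: det_ofm ofmZ)
  have mz0: "mz \<noteq> 0"
  proof
    assume "mz = 0"
    then have "idot mz (axis k 1) = 0" by (simp add: idot_def)
    then show False using real_mz[of "axis k 1"] psie detN by simp
  qed
  have mzL: "\<forall>x\<in>L. idot mz x = 0"
  proof
    fix x assume "x \<in> L"
    then have "insert (\<psi> x) B \<subseteq> span B" using B(3) span_superset by blast
    then have "dim (insert (\<psi> x) B) \<le> CARD('n) - 1" using dimB by (metis dim_subset)
    then have "det (Mr (\<psi> x)) = 0" using rankMr det_eq_0_rank
      by (metis diff_less le_less_trans zero_less_card_finite zero_less_one)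
    then show "idot mz x = 0" using real_mz[of x] by simp
  qed
  have mzK: "\<forall>x. idot mz x = 0 \<longrightarrow> x \<in> L"
  proof (intro allI impI)
    fix x assume x0: "idot mz x = 0"
    define N where "N = Mr ?e"
    define Zk where "Zk = Z (axis k 1)"
    have NZk: "N = ofm Zk" by (simp add: N_def Zk_def ofmZ psie)
    define Dz where "Dz = det Zk"
    have DN: "det N = of_int Dz" by (simp add: NZk Dz_def det_ofm)
    have Dz0: "Dz \<noteq> 0" using detN DN N_def by simp
    define A where "A = transpose N"
    define y where "y = \<psi> x"
    define r where "r = (\<chi> q. det (\<chi> i j. if j = q then y$i else A$i$j) / det A)"
    have detA: "det A = of_int Dz" by (simp add: A_def DN)
    have Ar: "A *v r = y" using cramer[of A r y] detA Dz0 by (simp add: r_def)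
    define nq where "nq = (\<lambda>q. det ((\<chi> i. if i = q then x else row i Zk) :: int^'n^'n))"
    have numer: "det ((\<chi> i j. if j = q then y$i else A$i$j) :: real^'n^'n) = of_int (nq q)" for q
    proof -
      have "(\<chi> i j. if j = q then y$i else A$i$j) = transpose (ofm (\<chi> i. if i = q then x else row i Zk))"
        by (auto simp: vec_eq_iff transpose_def ofm_def A_def NZk y_def \<psi>_def row_def)
      then show ?thesis by (simp add: nq_def det_ofm)
    qed
    have nq0: "nq i0 = 0"
    proof -
      have "(\<chi> i. if i = i0 then x else row i Zk) = Z x"
        by (auto simp: vec_eq_iff Zk_def Z_def row_def)
      then show ?thesis using x0 idot_mz by (simp add: nq_def)
    qed
    have rq: "of_int Dz * r$q = of_int (nq q)" for q
      using Dz0 by (simp add: r_def numer detA)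
    have yexp: "y = (\<Sum>q\<in>UNIV. r$q *s row q N)"
      using Ar by (simp add: matrix_mult_sum A_def)
    have key: "Dz *s x = (\<Sum>q\<in>UNIV. nq q *s row q Zk)"
    proof -
      have "real_of_int (Dz * x$c) = real_of_int ((\<Sum>q\<in>UNIV. nq q *s row q Zk) $ c)" for c
      proof -
        have "real_of_int (Dz * x$c) = of_int Dz * y$c" by (simp add: y_def \<psi>_def)
        also have "\<dots> = (\<Sum>q\<in>UNIV. of_int Dz * r$q * N$q$c)"
          by (subst yexp) (simp add: sum_component sum_distrib_left row_def mult.assoc)
        also have "\<dots> = (\<Sum>q\<in>UNIV. of_int (nq q) * of_int (Zk$q$c))"
          by (simp add: rq NZk ofm_def)
        also have "\<dots> = real_of_int ((\<Sum>q\<in>UNIV. nq q *s row q Zk) $ c)"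
          by (simp add: sum_component row_def)
        finally show ?thesis .
      qed
      then have "Dz * x$c = (\<Sum>q\<in>UNIV. nq q *s row q Zk) $ c" for c
        by (simp only: of_int_eq_iff)
      then show ?thesis by (simp add: vec_eq_iff)
    qed
    have "(\<Sum>q\<in>UNIV. nq q *s row q Zk) \<in> L"
    proof (rule L_sum[OF sL])
      fix q :: 'n
      show "nq q *s row q Zk \<in> L"
      proof (cases "q = i0")
        case True then show ?thesis using nq0 L_props(1)[OF sL] by (simp add: vector_smult_lzero)
      next
        case False
        then have "row q Zk = l q" by (simp add: Zk_def Z_def row_def)
        then show ?thesis using l[OF False] L_smult[OF sL] by simp
      qed
    qed simp
    then show "x \<in> L" using key Dz0 L_props(4)[OF sL] by metis
  qed
  show ?thesis using that mz0 mzL mzK by blast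
qed

lemma idot_lincomb: "idot a (\<Sum>G\<in>A. c G *s lam G) = (\<Sum>G\<in>A. c G * idot a (lam G))"
  by (simp add: idot_sum idot_smult)

lemma smult_delta: "(if F = G then (1::int) else 0) *s v = (if F = G then v else 0)"
  by (simp add: vector_smult_lzero)

lemma vertex_dual:
  fixes A :: "'b set" and lam :: "'b \<Rightarrow> int^'n"
  assumes ib: "\<forall>x::int^'n. \<exists>!c::'b \<Rightarrow> int. (\<forall>F. F \<notin> A \<longrightarrow> c F = 0) \<and> x = (\<Sum>F\<in>A. c F *s lam F)"
    and fin: "finite A"
  shows "\<And>F G. F \<in> A \<Longrightarrow> G \<in> A \<Longrightarrow>
           idot (THE a. \<forall>G\<in>A. idot a (lam G) = (if G = F then 1 else 0)) (lam G) = (if G = F then 1 else 0)"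
    and "\<And>x. x = (\<Sum>F\<in>A. idot (THE a. \<forall>G\<in>A. idot a (lam G) = (if G = F then 1 else 0)) x *s lam F)"
proof -
  define crd where "crd x = (THE c. (\<forall>F. F \<notin> A \<longrightarrow> c F = 0) \<and> x = (\<Sum>F\<in>A. c F *s lam F))" for x
  have crd_prop: "(\<forall>F. F \<notin> A \<longrightarrow> crd x F = 0) \<and> x = (\<Sum>F\<in>A. crd x F *s lam F)" for x
    unfolding crd_def by (rule theI'[OF ib[rule_format]])
  have crd_uniq: "c = crd x" if "\<forall>F. F \<notin> A \<longrightarrow> c F = 0" "x = (\<Sum>F\<in>A. c F *s lam F)" for c x
    unfolding crd_def by (rule the1_equality[OF ib[rule_format], symmetric]) (use that in blast)
  have crd_lam: "crd (lam G) F = (if F = G then 1 else 0)" if "G \<in> A" for G F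
  proof -
    have "(\<Sum>F\<in>A. (if F = G then (1::int) else 0) *s lam F) = lam G"
      using that fin by (simp add: smult_delta)
    then have "(\<lambda>F. if F = G then (1::int) else 0) = crd (lam G)"
      using that by (intro crd_uniq) auto
    from this[symmetric] show ?thesis by simp
  qed
  define d where "d F = (\<chi> i. crd (axis i 1) F)" for F
  have d_crd: "idot (d F) x = crd x F" if "F \<in> A" for F x
  proof -
    define c' where "c' F = (if F \<in> A then idot (d F) x else 0)" for F
    have "x = (\<Sum>F\<in>A. c' F *s lam F)"
    proof -
      have "x $ k = (\<Sum>F\<in>A. c' F *s lam F) $ k" for k
      proof -
        have ek: "axis i 1 $ k = (\<Sum>F\<in>A. crd (axis i 1) F * lam F $ k)" for i :: 'n
        proof -
          have "axis i 1 $ k = (\<Sum>F\<in>A. crd (axis i 1) F *s lam F) $ k"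
            using crd_prop[of "axis i 1"] by metis
          then show ?thesis by (simp add: sum_component)
        qed
        have "(\<Sum>F\<in>A. c' F *s lam F) $ k = (\<Sum>F\<in>A. (\<Sum>i\<in>UNIV. crd (axis i 1) F * x $ i) * lam F $ k)"
          by (simp add: sum_component c'_def idot_def d_def)
        also have "\<dots> = (\<Sum>i\<in>UNIV. x $ i * (\<Sum>F\<in>A. crd (axis i 1) F * lam F $ k))"
          by (simp add: sum_distrib_left sum_distrib_right sum.swap[of _ A] algebra_simps)
        also have "\<dots> = (\<Sum>i\<in>UNIV. x $ i * axis i 1 $ k)" by (simp add: ek)
        also have "\<dots> = x $ k"
        proof -
          have "axis i 1 $ k = axis k (1::int) $ i" for i by (simp add: axis_def)
          then show ?thesis using idot_axis[of x k] by (simp add: idot_def)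
        qed
        finally show ?thesis by simp
      qed
      then show ?thesis by (simp add: vec_eq_iff)
    qed
    then have "c' = crd x" by (intro crd_uniq) (auto simp: c'_def)
    then show ?thesis using that c'_def by metis
  qed
  have the_d: "(THE a. \<forall>G\<in>A. idot a (lam G) = (if G = F then 1 else 0)) = d F" if "F \<in> A" for F
  proof (rule the_equality)
    show "\<forall>G\<in>A. idot (d F) (lam G) = (if G = F then 1 else 0)"
      using that by (simp add: d_crd crd_lam)
  next
    fix a assume a: "\<forall>G\<in>A. idot a (lam G) = (if G = F then 1 else 0)"
    have "idot a x = idot (d F) x" for x
    proof -
      have "idot a x = idot a (\<Sum>G\<in>A. crd x G *s lam G)" using crd_prop[of x] by metis
      also have "\<dots> = (\<Sum>G\<in>A. crd x G * (if G = F then 1 else 0))"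
        by (simp add: idot_lincomb a)
      also have "\<dots> = crd x F" using that fin by (simp add: if_distrib[of "\<lambda>t. _ * t"] cong: if_cong)
      finally show ?thesis using d_crd that by simp
    qed
    then show "a = d F" by (metis idot_axis vec_eq_iff)
  qed
  show "\<And>F G. F \<in> A \<Longrightarrow> G \<in> A \<Longrightarrow>
           idot (THE a. \<forall>G\<in>A. idot a (lam G) = (if G = F then 1 else 0)) (lam G) = (if G = F then 1 else 0)"
    by (simp add: the_d d_crd crd_lam)
  show "\<And>x. x = (\<Sum>F\<in>A. idot (THE a. \<forall>G\<in>A. idot a (lam G) = (if G = F then 1 else 0)) x *s lam F)"
  proof -
    fix x
    have "(\<Sum>F\<in>A. idot (THE a. \<forall>G\<in>A. idot a (lam G) = (if G = F then 1 else 0)) x *s lam F)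
        = (\<Sum>F\<in>A. crd x F *s lam F)" by (rule sum.cong) (simp_all add: the_d d_crd)
    then show "x = (\<Sum>F\<in>A. idot (THE a. \<forall>G\<in>A. idot a (lam G) = (if G = F then 1 else 0)) x *s lam F)"
      using crd_prop[of x] by simp
  qed
qed

lemma face_has_vertex:
  fixes P :: "(real^'n) set"
  assumes "polytope P" "G face_of P" "G \<noteq> {}"
  obtains v where "v \<in> G" "v extreme_point_of P"
proof -
  have "compact G" "convex G"
    using assms face_of_imp_compact face_of_imp_convex polytope_imp_compact polytope_imp_convex by blast+
  then obtain v where v: "v extreme_point_of G" using extreme_point_exists_convex assms(3) by blast
  then have "{v} face_of P" using face_of_trans assms(2) face_of_singleton by blast
  moreover have "v \<in> G" using v by (simp add: extreme_point_of_def)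
  ultimately show ?thesis using that face_of_singleton by blast
qed

lemma separate_facet:
  fixes P :: "(real^'n) set"
  assumes "polytope P" "v extreme_point_of P" "w \<in> P" "w \<noteq> v"
  obtains F where "F facet_of P" "v \<in> F" "w \<notin> F"
proof -
  have "{v} = \<Inter>{F. F facet_of P \<and> {v} \<subseteq> F}"
    using face_of_polyhedron[OF polytope_imp_polyhedron[OF assms(1)], of "{v}"] assms face_of_singleton
    by blast
  then show ?thesis using that assms(4) by blast
qed

lemma pad_subset:
  assumes "finite A" "B \<subseteq> A" "card B \<le> k" "k \<le> card A"
  obtains S where "B \<subseteq> S" "S \<subseteq> A" "card S = k"
proof -
  have "card (A - B) = card A - card B" using assms by (simp add: card_Diff_subset finite_subset)
  then have "k - card B \<le> card (A - B)" using assms by arith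
  then obtain T where T: "T \<subseteq> A - B" "card T = k - card B" "finite T"
    by (rule obtain_subset_with_card_n)
  have "card (B \<union> T) = card B + card T"
    using T assms by (intro card_Un_disjoint) (auto intro: finite_subset)
  then have "card (B \<union> T) = k" using T assms by simp
  then show ?thesis using that[of "B \<union> T"] T assms by blast
qed

theorem lemma4p6:
  fixes P :: "(real^'n) set" and lam :: "(real^'n) set \<Rightarrow> int^'n"
    and L :: "(int^'n) set" and j :: nat
  assumes "quasitoric_pair P lam"
    and "subtorus_lattice L"
    and "1 \<le> j" and "j \<le> CARD('n) - 1"
  shows "j_general_position P lam L j \<longleftrightarrow> Kspec_dim P lam L \<le> int CARD('n) - 2 - int j"
proof -
  have n2: "CARD('n) \<ge> 2" using assms(3,4) by arith
  have poly: "polytope P" and affP: "aff_dim P = int CARD('n)"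
    and cardv: "\<And>v. v extreme_point_of P \<Longrightarrow> card (facets_at P v) = CARD('n)"
    and ibv: "\<And>v. v extreme_point_of P \<Longrightarrow> int_basis (facets_at P v) lam"
    using assms(1) unfolding quasitoric_pair_def simple_polytope_def by auto
  have finv: "finite (facets_at P v)" if "v extreme_point_of P" for v
    using cardv[OF that] n2 card.infinite by fastforce
  have dual: "idot (weight P lam v F) (lam G) = (if G = F then 1 else 0)"
    if "v extreme_point_of P" "F \<in> facets_at P v" "G \<in> facets_at P v" for v F G
    using vertex_dual(1)[OF ibv[OF that(1), unfolded int_basis_def] finv[OF that(1)] that(2,3)]
    unfolding weight_def .
  have expand: "x = (\<Sum>F\<in>facets_at P v. idot (weight P lam v F) x *s lam F)"
    if "v extreme_point_of P" for v x
    using vertex_dual(2)[OF ibv[OF that(1), unfolded int_basis_def] finv[OF that(1)]]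
    unfolding weight_def .
  have eval: "idot a x = (\<Sum>F\<in>facets_at P v. idot (weight P lam v F) x * idot a (lam F))"
    if "v extreme_point_of P" for v a x
    by (subst expand[OF that, of x]) (simp add: idot_lincomb)
  obtain mz where mz0: "mz \<noteq> 0" and mzL: "\<forall>x\<in>L. idot mz x = 0"
    and mzK: "\<forall>x. idot mz x = 0 \<longrightarrow> x \<in> L"
    using mz_exists[OF assms(2)] by blast
  have finfac: "finite {F. F facet_of P}" by (rule finite_polytope_facets[OF poly])
  have finK: "finite (Kspec_simplices P lam L)"
  proof (rule finite_subset)
    show "Kspec_simplices P lam L \<subseteq> Pow {F. F facet_of P}"
      by (auto simp: Kspec_simplices_def special_facets_def)
  qed (use finfac in simp)
  have Kiff: "Kspec_dim P lam L \<le> int CARD('n) - 2 - int j \<longleftrightarrow>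
      (\<forall>\<sigma>\<in>Kspec_simplices P lam L. card \<sigma> + j + 1 \<le> CARD('n))"
  proof (cases "Kspec_simplices P lam L = {}")
    case True
    then show ?thesis using assms(4) n2 by (simp add: Kspec_dim_def)
  next
    case False
    have "Kspec_dim P lam L = int (Max (card ` Kspec_simplices P lam L)) - 1"
      using False by (simp add: Kspec_dim_def)
    moreover have "Max (card ` Kspec_simplices P lam L) \<le> CARD('n) - 1 - j \<longleftrightarrow>
        (\<forall>\<sigma>\<in>Kspec_simplices P lam L. card \<sigma> \<le> CARD('n) - 1 - j)"
      using False finK by (simp add: Max_le_iff)
    ultimately show ?thesis using assms(4) n2 by auto
  qed
  show ?thesis
  proof
    assume jg: "j_general_position P lam L j"
    then have ind: "\<And>v S. v extreme_point_of P \<Longrightarrow> S \<subseteq> facets_at P v \<Longrightarrow> card S = j \<Longrightarrow>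
        restricted_weights_indep P lam L v S"
      unfolding j_general_position_def by blast
    show "Kspec_dim P lam L \<le> int CARD('n) - 2 - int j"
      unfolding Kiff
    proof
      fix \<sigma> assume \<sigma>: "\<sigma> \<in> Kspec_simplices P lam L"
      then have \<sigma>ne: "\<sigma> \<noteq> {}" and \<sigma>sp: "\<And>F. F \<in> \<sigma> \<Longrightarrow> F facet_of P \<and> lam F \<in> L"
        and \<sigma>int: "\<Inter>\<sigma> \<noteq> {}"
        by (auto simp: Kspec_simplices_def special_facets_def)
      have "\<Inter>\<sigma> face_of P" by (rule face_of_Inter[OF \<sigma>ne]) (use \<sigma>sp facet_of_def in blast)
      then obtain v where v: "v \<in> \<Inter>\<sigma>" "v extreme_point_of P"
        using face_has_vertex[OF poly] \<sigma>int by metis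
      define Sp where "Sp = {F \<in> facets_at P v. lam F \<in> L}"
      have finA: "finite (facets_at P v)" using finv v(2) .
      have \<sigma>Sp: "\<sigma> \<subseteq> Sp" using v \<sigma>sp by (auto simp: Sp_def facets_at_def)
      show "card \<sigma> + j + 1 \<le> CARD('n)"
      proof (rule ccontr)
        assume "\<not> ?thesis"
        then have c\<sigma>: "card \<sigma> + j \<ge> CARD('n)" by simp
        define NS where "NS = facets_at P v - Sp"
        have SpA: "Sp \<subseteq> facets_at P v" by (auto simp: Sp_def)
        have "card Sp \<ge> card \<sigma>" using \<sigma>Sp SpA finA by (meson card_mono finite_subset)
        moreover have "card NS = CARD('n) - card Sp"
          using card_Diff_subset[OF finite_subset[OF SpA finA] SpA] cardv[OF v(2)] by (simp add: NS_def)
        ultimately have cNS: "card NS \<le> j" using c\<sigma> by arith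
        have NSA: "NS \<subseteq> facets_at P v" by (simp add: NS_def)
        have jA: "j \<le> card (facets_at P v)" using cardv[OF v(2)] assms(4) by simp
        obtain S where S: "NS \<subseteq> S" "S \<subseteq> facets_at P v" "card S = j"
          by (rule pad_subset[OF finA NSA cNS jA])
        have finS: "finite S" using S(2) finA finite_subset by blast
        have indS: "restricted_weights_indep P lam L v S" using ind[OF v(2) S(2) S(3)] .
        define c where "c F = (of_int (idot mz (lam F)) :: rat)" for F
        have hyp: "\<forall>x\<in>L. (\<Sum>F\<in>S. c F * of_int (idot (weight P lam v F) x)) = 0"
        proof
          fix x assume x: "x \<in> L"
          have "(\<Sum>F\<in>S. c F * of_int (idot (weight P lam v F) x))
              = of_int (\<Sum>F\<in>S. idot (weight P lam v F) x * idot mz (lam F))"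
            by (simp add: c_def mult.commute)
          also have "(\<Sum>F\<in>S. idot (weight P lam v F) x * idot mz (lam F))
              = (\<Sum>F\<in>facets_at P v. idot (weight P lam v F) x * idot mz (lam F))"
          proof (rule sum.mono_neutral_left[OF finA S(2)])
            show "\<forall>i\<in>facets_at P v - S. idot (weight P lam v i) x * idot mz (lam i) = 0"
              using S(1) mzL by (auto simp: NS_def Sp_def)
          qed
          also have "\<dots> = idot mz x" by (rule eval[OF v(2), symmetric])
          also have "\<dots> = 0" using mzL x by blast
          finally show "(\<Sum>F\<in>S. c F * of_int (idot (weight P lam v F) x)) = 0" by simp
        qed
        then have cz: "\<forall>F\<in>S. c F = 0" using indS unfolding restricted_weights_indep_def by blast
        have "idot mz (lam F) = 0" if "F \<in> facets_at P v" for F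
        proof (cases "F \<in> S")
          case True then show ?thesis using cz by (simp add: c_def)
        next
          case False then show ?thesis using S(1) that mzL by (auto simp: NS_def Sp_def)
        qed
        then have "idot mz x = 0" for x using eval[OF v(2), of mz x] by simp
        then have "mz = 0" by (rule idot_zero_imp)
        with mz0 show False ..
      qed
    qed
  next
    assume Kd: "Kspec_dim P lam L \<le> int CARD('n) - 2 - int j"
    have Kc: "\<And>\<sigma>. \<sigma> \<in> Kspec_simplices P lam L \<Longrightarrow> card \<sigma> + j + 1 \<le> CARD('n)"
      using Kd Kiff by blast
    have spv: "card {F \<in> facets_at P v. lam F \<in> L} + j + 1 \<le> CARD('n)"
      if v: "v extreme_point_of P" for v
    proof (cases "{F \<in> facets_at P v. lam F \<in> L} = {}")
      case True
      have "card {F \<in> facets_at P v. lam F \<in> L} = 0" by (simp only: True card.empty)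
      then show ?thesis using assms(4) n2 by arith
    next
      case False
      have "{F \<in> facets_at P v. lam F \<in> L} \<in> Kspec_simplices P lam L"
        using False by (auto simp: Kspec_simplices_def special_facets_def facets_at_def)
      then show ?thesis by (rule Kc)
    qed
    have Pne: "P \<noteq> {}" using affP by auto
    obtain v0 where v0: "v0 extreme_point_of P"
      using extreme_point_exists_convex[OF polytope_imp_compact[OF poly] polytope_imp_convex[OF poly] Pne]
      by blast
    show "j_general_position P lam L j" unfolding j_general_position_def
    proof (intro conjI)
      have fa: "{F. F facet_of P \<and> {v0} \<subseteq> F} = facets_at P v0" by (auto simp: facets_at_def)
      have "L \<subseteq> stab_lattice P lam {v0}"
        unfolding stab_lattice_def fa
      proof
        fix x assume "x \<in> L"
        show "x \<in> {x. \<exists>c. x = (\<Sum>F\<in>facets_at P v0. c F *s lam F)}"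
          using expand[OF v0, of x] by (intro CollectI exI[of _ "\<lambda>F. idot (weight P lam v0 F) x"])
      qed
      then have "{v0} \<in> fixed_faces P lam L"
        using v0 face_of_singleton by (auto simp: fixed_faces_def)
      then show "fixed_faces P lam L \<noteq> {}" by blast
    next
      show "\<forall>G\<in>fixed_faces P lam L. \<exists>v. G = {v}"
      proof
        fix G assume "G \<in> fixed_faces P lam L"
        then have G: "G face_of P" "G \<noteq> {}" "L \<subseteq> stab_lattice P lam G" by (simp_all add: fixed_faces_def)
        obtain v where v: "v \<in> G" "v extreme_point_of P" using face_has_vertex[OF poly G(1,2)] by blast
        show "\<exists>v. G = {v}"
        proof (rule ccontr)
          assume ns: "\<not> ?thesis"
          then obtain w where w: "w \<in> G" "w \<noteq> v" using v(1) by blast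
          have wP: "w \<in> P" using G(1) face_of_imp_subset w by blast
          obtain F0 where F0: "F0 facet_of P" "v \<in> F0" "w \<notin> F0"
            using separate_facet[OF poly v(2) wP w(2)] by blast
          have F0v: "F0 \<in> facets_at P v" using F0 by (simp add: facets_at_def)
          have a0: "idot (weight P lam v F0) x = 0" if "x \<in> L" for x
          proof -
            from G(3) that obtain c where x: "x = (\<Sum>F\<in>{F. F facet_of P \<and> G \<subseteq> F}. c F *s lam F)"
              unfolding stab_lattice_def by blast
            have "idot (weight P lam v F0) x
                = (\<Sum>F\<in>{F. F facet_of P \<and> G \<subseteq> F}. c F * idot (weight P lam v F0) (lam F))"
              by (simp add: x idot_lincomb)
            also have "\<dots> = 0"
            proof (rule sum.neutral, rule ballI)
              fix F assume F: "F \<in> {F. F facet_of P \<and> G \<subseteq> F}"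
              then have "F \<in> facets_at P v" "F \<noteq> F0" using v(1) w F0(3) by (auto simp: facets_at_def)
              then show "c F * idot (weight P lam v F0) (lam F) = 0"
                using dual[OF v(2) F0v] by simp
            qed
            finally show ?thesis .
          qed
          have allsp: "lam F \<in> L" if "F \<in> facets_at P v" "F \<noteq> F0" for F
          proof -
            define y where "y = idot mz (lam F0) *s lam F - idot mz (lam F) *s lam F0"
            have "idot mz y = 0" by (simp add: y_def idot_diff idot_smult)
            then have "y \<in> L" using mzK by blast
            then have "idot (weight P lam v F0) y = 0" by (rule a0)
            moreover have "idot (weight P lam v F0) y = - idot mz (lam F)"
              using dual[OF v(2) F0v that(1)] dual[OF v(2) F0v F0v] that(2)
              by (simp add: y_def idot_diff idot_smult)
            ultimately have "idot mz (lam F) = 0" by simp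
            then show ?thesis using mzK by blast
          qed
          have "facets_at P v - {F0} \<subseteq> {F \<in> facets_at P v. lam F \<in> L}" using allsp by blast
          then have "card (facets_at P v - {F0}) \<le> card {F \<in> facets_at P v. lam F \<in> L}"
            by (rule card_mono[rotated]) (simp add: finv[OF v(2)])
          moreover have "card (facets_at P v - {F0}) = CARD('n) - 1"
            using cardv[OF v(2)] F0v finv[OF v(2)] by (simp add: card_Diff_singleton)
          ultimately show False using spv[OF v(2)] assms(3) n2 by arith
        qed
      qed
    next
      show "\<forall>v. v extreme_point_of P \<longrightarrow> (\<forall>S. S \<subseteq> facets_at P v \<and> card S = j \<longrightarrow>
          restricted_weights_indep P lam L v S)"
      proof (intro allI impI)
        fix v S assume v: "v extreme_point_of P" and S: "S \<subseteq> facets_at P v \<and> card S = j"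
        define Sp where "Sp = {F \<in> facets_at P v. lam F \<in> L}"
        have finA: "finite (facets_at P v)" using finv v .
        have SpA: "Sp \<subseteq> facets_at P v" by (auto simp: Sp_def)
        have finS: "finite S" using S finA finite_subset by blast
        have "card (facets_at P v - Sp) = CARD('n) - card Sp"
          using card_Diff_subset[OF finite_subset[OF SpA finA] SpA] cardv[OF v] by simp
        then have "card (facets_at P v - Sp) > card S" using spv[OF v] S unfolding Sp_def by arith
        then have "\<not> (facets_at P v - Sp \<subseteq> S)"
        proof (intro notI)
          assume "card S < card (facets_at P v - Sp)" "facets_at P v - Sp \<subseteq> S"
          then show False using card_mono[OF finS, of "facets_at P v - Sp"] by simp
        qed
        then obtain F1 where F1: "F1 \<in> facets_at P v" "lam F1 \<notin> L" "F1 \<notin> S" by (auto simp: Sp_def)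
        have m1: "idot mz (lam F1) \<noteq> 0" using mzK F1(2) by blast
        show "restricted_weights_indep P lam L v S" unfolding restricted_weights_indep_def
        proof (intro allI impI ballI)
          fix c :: "(real^'n) set \<Rightarrow> rat" and F
          assume hc: "\<forall>x\<in>L. (\<Sum>F\<in>S. c F * of_int (idot (weight P lam v F) x)) = 0" and F: "F \<in> S"
          define y where "y = idot mz (lam F1) *s lam F - idot mz (lam F) *s lam F1"
          have "idot mz y = 0" by (simp add: y_def idot_diff idot_smult)
          then have yL: "y \<in> L" using mzK by blast
          have wy: "c F' * of_int (idot (weight P lam v F') y) = (if F' = F then c F * of_int (idot mz (lam F1)) else 0)"
            if F': "F' \<in> S" for F'
          proof -
            have "F' \<in> facets_at P v" "F \<in> facets_at P v" "F' \<noteq> F1" using F' F S F1 by auto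
            then show ?thesis
              using dual[OF v \<open>F' \<in> facets_at P v\<close> \<open>F \<in> facets_at P v\<close>] dual[OF v \<open>F' \<in> facets_at P v\<close> F1(1)]
              by (simp add: y_def idot_diff idot_smult)
          qed
          have "(\<Sum>F'\<in>S. c F' * of_int (idot (weight P lam v F') y)) = c F * of_int (idot mz (lam F1))"
            using F finS by (simp add: wy cong: sum.cong)
          with hc yL have "c F * of_int (idot mz (lam F1)) = 0" by simp
          then show "c F = 0" using m1 by simp
        qed
      qed
    qed
  qed
qed

end
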